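(* Let $\Gamma,\Delta,\Pi,\Sigma$ be finite multisets of $\mathcal{L}_{A_m}^{\Box}$-formulas such that the sequent $\Gamma,\Pi\Rightarrow\Sigma,\Delta$ is $\mathsf{K(A)}$-valid and no variable occurs both in a formula of $\Gamma\uplus\Delta$ and in a formula of $\Pi\uplus\Sigma$. Then $\Gamma\Rightarrow\Delta$ and $\Pi\Rightarrow\Sigma$ are both $\mathsf{K(A)}$-valid.
   Context: $\mathcal{L}_{A_m}^{\Box}$-formulas are built from a countably infinite set $\mathrm{Var}$ of variables using binary $\to$ and unary $\Box$. Fix $p_0\in\mathrm{Var}$; $\overline{0}:=p_0\to p_0$, $\neg\varphi:=\varphi\to\overline{0}$, $\varphi\&\psi:=\neg\varphi\to\psi$. A $\mathsf{K(A)}$-model $\langle W,R,V\rangle$: nonempty $W$, $R\subseteq W\times W$, $V\colon\mathrm{Var}\times W\to[-r,r]$ for some real $r\ge0$, extended by $V(\varphi\to\psi,x)=V(\psi,x)-V(\varphi,x)$, $V(\Box\varphi,x)=\inf_{\mathbb{R}}\{V(\varphi,y):Rxy\}$ (empty infimum $=0$). A formula is $\mathsf{K(A)}$-valid if its value is $\ge0$ at every world of every model. A sequent $\Gamma\Rightarrow\Delta$ is an ordered pair of finite multisets of formulas; it is $\mathsf{K(A)}$-valid if $\mathcal{I}(\Gamma\Rightarrow\Delta)$ is, where $\mathcal{I}(\varphi_1,\dots,\varphi_n\Rightarrow\psi_1,\dots,\psi_m):=(\varphi_1\&\dots\&\varphi_n)\to(\psi_1\&\dots\&\psi_m)$, empty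 $\&$-combination $=\overline{0}$ (equivalently: $\sum_i V(\varphi_i,x)\le\sum_j V(\psi_j,x)$ everywhere). *)

theory Defs
  imports Complex_Main "HOL-Library.Multiset"
begin

datatype fm = Var nat | Imp fm fm | Box fm

fun vars :: "fm \<Rightarrow> nat set" where
  "vars (Var p) = {p}"
| "vars (Imp a b) = vars a \<union> vars b"
| "vars (Box a) = vars a"

fun val :: "('w \<Rightarrow> 'w \<Rightarrow> bool) \<Rightarrow> (nat \<Rightarrow> 'w \<Rightarrow> real) \<Rightarrow> fm \<Rightarrow> 'w \<Rightarrow> real" where
  "val R V (Var p) x = V p x"
| "val R V (Imp a b) x = val R V b x - val R V a x"
| "val R V (Box a) x =
     (if {y. R x y} = {} then 0 else Inf ((\<lambda>y. val R V a y) ` {y. R x y}))"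

definition KA_model :: "('w \<Rightarrow> 'w \<Rightarrow> bool) \<Rightarrow> (nat \<Rightarrow> 'w \<Rightarrow> real) \<Rightarrow> bool" where
  "KA_model R V \<longleftrightarrow> (\<exists>r\<ge>0. \<forall>p x. \<bar>V p x\<bar> \<le> r)"

definition KA_valid_seq :: "'w itself \<Rightarrow> fm multiset \<Rightarrow> fm multiset \<Rightarrow> bool" where
  "KA_valid_seq (_ :: 'w itself) \<Gamma> \<Delta> \<longleftrightarrow>
     (\<forall>(R :: 'w \<Rightarrow> 'w \<Rightarrow> bool) V x. KA_model R V \<longrightarrow>
        (\<Sum>\<phi>\<in>#\<Gamma>. val R V \<phi> x) \<le> (\<Sum>\<psi>\<in>#\<Delta>. val R V \<psi> x))"

definition mvars :: "fm multiset \<Rightarrow> nat set" where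
  "mvars M = (\<Union>\<phi>\<in>set_mset M. vars \<phi>)"

end

theory Submission
  imports Defs
begin

lemma val_agree:
  assumes "vars \<phi> \<subseteq> S" "\<forall>p\<in>S. \<forall>w. V p w = V' p w"
  shows "val R V \<phi> w = val R V' \<phi> w"
  using assms
proof (induction \<phi> arbitrary: w)
  case (Box a)
  then have "\<And>y. val R V a y = val R V' a y" by auto
  then have "(\<lambda>y. val R V a y) = (\<lambda>y. val R V' a y)" by blast
  then show ?case by (simp only: val.simps)
qed auto

lemma val_zero:
  assumes "\<forall>p\<in>vars \<phi>. \<forall>w. V p w = 0"
  shows "val R V \<phi> w = 0"
  using assms
proof (induction \<phi> arbitrary: w)
  case (Box a)
  then have h: "\<And>y. val R V a y = 0" by auto
  show ?case
  proof (cases "{y. R w y} = {}")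
    case False
    then have "(\<lambda>y. val R V a y) ` {y. R w y} = {0}" using h by auto
    then show ?thesis using False by simp
  qed simp
qed auto

lemma half:
  fixes \<Gamma> \<Delta> \<Pi> \<Sigma> :: "fm multiset"
  assumes v: "KA_valid_seq TYPE('w) (\<Gamma> + \<Pi>) (\<Sigma> + \<Delta>)"
    and d: "mvars (\<Gamma> + \<Delta>) \<inter> mvars (\<Pi> + \<Sigma>) = {}"
  shows "KA_valid_seq TYPE('w) \<Gamma> \<Delta>"
  unfolding KA_valid_seq_def
proof (intro allI impI)
  fix R :: "'w \<Rightarrow> 'w \<Rightarrow> bool" and V x
  assume m: "KA_model R V"
  define S where "S = mvars (\<Gamma> + \<Delta>)"
  define V' where "V' = (\<lambda>p w. if p \<in> S then V p w else 0)"
  have m': "KA_model R V'"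
  proof -
    obtain r where r: "r \<ge> 0" "\<forall>p x. \<bar>V p x\<bar> \<le> r" using m unfolding KA_model_def by blast
    have "\<forall>p x. \<bar>V' p x\<bar> \<le> r" using r unfolding V'_def by simp
    then show ?thesis using r(1) unfolding KA_model_def by blast
  qed
  have ag: "\<forall>p\<in>S. \<forall>w. V p w = V' p w" unfolding V'_def by simp
  have e1: "\<And>\<phi>. \<phi> \<in># \<Gamma> + \<Delta> \<Longrightarrow> val R V' \<phi> x = val R V \<phi> x"
  proof -
    fix \<phi> assume "\<phi> \<in># \<Gamma> + \<Delta>"
    then have "vars \<phi> \<subseteq> S" unfolding S_def mvars_def by auto
    then show "val R V' \<phi> x = val R V \<phi> x" using val_agree[OF _ ag] by metis
  qed
  have e0: "\<And>\<phi>. \<phi> \<in># \<Pi> + \<Sigma> \<Longrightarrow> val R V' \<phi> x = 0"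
  proof -
    fix \<phi> assume "\<phi> \<in># \<Pi> + \<Sigma>"
    then have "vars \<phi> \<subseteq> mvars (\<Pi> + \<Sigma>)" unfolding mvars_def by auto
    then have "\<forall>p\<in>vars \<phi>. \<forall>w. V' p w = 0" using d unfolding V'_def S_def by auto
    then show "val R V' \<phi> x = 0" by (rule val_zero)
  qed
  have "(\<Sum>\<phi>\<in>#\<Gamma> + \<Pi>. val R V' \<phi> x) \<le> (\<Sum>\<psi>\<in>#\<Sigma> + \<Delta>. val R V' \<psi> x)"
    using v m' unfolding KA_valid_seq_def by blast
  moreover have "(\<Sum>\<phi>\<in>#\<Gamma>. val R V' \<phi> x) = (\<Sum>\<phi>\<in>#\<Gamma>. val R V \<phi> x)"
    using e1 by (intro arg_cong[where f=sum_mset] image_mset_cong) auto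
  moreover have "(\<Sum>\<phi>\<in>#\<Delta>. val R V' \<phi> x) = (\<Sum>\<phi>\<in>#\<Delta>. val R V \<phi> x)"
    using e1 by (intro arg_cong[where f=sum_mset] image_mset_cong) auto
  moreover have "(\<Sum>\<phi>\<in>#\<Pi>. val R V' \<phi> x) = 0"
  proof -
    have "image_mset (\<lambda>\<phi>. val R V' \<phi> x) \<Pi> = image_mset (\<lambda>\<phi>. 0) \<Pi>"
      using e0 by (intro image_mset_cong) auto
    then show ?thesis by simp
  qed
  moreover have "(\<Sum>\<phi>\<in>#\<Sigma>. val R V' \<phi> x) = 0"
  proof -
    have "image_mset (\<lambda>\<phi>. val R V' \<phi> x) \<Sigma> = image_mset (\<lambda>\<phi>. 0) \<Sigma>"
      using e0 by (intro image_mset_cong) auto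
    then show ?thesis by simp
  qed
  ultimately show "(\<Sum>\<phi>\<in>#\<Gamma>. val R V \<phi> x) \<le> (\<Sum>\<psi>\<in>#\<Delta>. val R V \<psi> x)"
    by simp
qed

theorem lemma4p7:
  fixes \<Gamma> \<Delta> \<Pi> \<Sigma> :: "fm multiset"
  assumes "KA_valid_seq TYPE('w) (\<Gamma> + \<Pi>) (\<Sigma> + \<Delta>)"
    and "mvars (\<Gamma> + \<Delta>) \<inter> mvars (\<Pi> + \<Sigma>) = {}"
  shows "KA_valid_seq TYPE('w) \<Gamma> \<Delta> \<and> KA_valid_seq TYPE('w) \<Pi> \<Sigma>"
proof
  show "KA_valid_seq TYPE('w) \<Gamma> \<Delta>" using half assms by blast
  have "KA_valid_seq TYPE('w) (\<Pi> + \<Gamma>) (\<Delta> + \<Sigma>)"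
    using assms(1) by (simp add: add.commute)
  moreover have "mvars (\<Pi> + \<Sigma>) \<inter> mvars (\<Gamma> + \<Delta>) = {}" using assms(2) by blast
  ultimately show "KA_valid_seq TYPE('w) \<Pi> \<Sigma>" using half by blast
qed

end
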